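(* Let $N\in\mathbb{N}$. For a function $f:\mathbb{R}^N\to\mathbb{R}$, $V>0$ and $p\in(0,\infty)$ define $$\|f\|_{p,V}:=\sup\Big\{\Big(\frac{1}{|\Omega|}\int_{\Omega}|f(x)|^{p}\,dx\Big)^{1/p} : \Omega\subset\mathbb{R}^N \text{ open and convex},\ |\Omega|=V\Big\},$$ and let $L^p_V:=\{f\mid \|f\|_{p,V}<\infty\}$ modulo functions vanishing almost everywhere. Let $p\in[1,\infty)$, $V>0$ and $d\in\mathbb{N}$. Then $$\|f\|_{p,d\cdot V}\leq\|f\|_{p,V}\quad\text{for all } f\in L^p_V.$$
   Context: $|\Omega|$ denotes the $N$-dimensional Lebesgue measure; functions are measurable. *)

theory Defs
  imports "HOL-Analysis.Analysis"
begin

definition ennreal_root :: "real \<Rightarrow> ennreal \<Rightarrow> ennreal" where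
  "ennreal_root p x = (if x = \<infinity> then \<infinity> else ennreal (enn2real x powr (1 / p)))"

definition mean_p :: "real \<Rightarrow> ('a::euclidean_space \<Rightarrow> real) \<Rightarrow> 'a set \<Rightarrow> ennreal" where
  "mean_p p f \<Omega> =
     ennreal_root p (ennreal (1 / measure lebesgue \<Omega>) *
                     (\<integral>\<^sup>+ x \<in> \<Omega>. ennreal (\<bar>f x\<bar> powr p) \<partial>lebesgue))"

definition norm_pV :: "real \<Rightarrow> real \<Rightarrow> ('a::euclidean_space \<Rightarrow> real) \<Rightarrow> ennreal" where
  "norm_pV p V f = (SUP \<Omega> \<in> {\<Omega>. open \<Omega> \<and> convex \<Omega> \<and> emeasure lebesgue \<Omega> = ennreal V}. mean_p p f \<Omega>)"

end

theory Submission
  imports Defs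
begin

lemma open_leb: "open (S::'a::euclidean_space set) \<Longrightarrow> S \<in> sets lebesgue"
  by (metis borel_open sets_completionI_sets sets_lborel)

lemma meas_lim:
  fixes \<Omega> :: "'a::euclidean_space set"
  assumes O: "\<Omega> \<in> sets lebesgue" "emeasure lebesgue \<Omega> < \<infinity>"
    and A: "\<And>n. A n \<in> sets lebesgue" "\<And>n. A n \<subseteq> \<Omega>"
    and B: "B \<in> sets lebesgue" "B \<subseteq> \<Omega>"
    and L: "AE x in lebesgue. (\<lambda>n. indicator (A n) x :: real) \<longlonglongrightarrow> indicator B x"
  shows "(\<lambda>n. measure lebesgue (A n)) \<longlonglongrightarrow> measure lebesgue B"
proof -
  have fin: "emeasure lebesgue S < \<infinity>" if "S \<subseteq> \<Omega>" "S \<in> sets lebesgue" for S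
    using emeasure_mono[OF that(1) O(1)] O(2) by (simp add: order_le_less_trans)
  have "(\<lambda>n. integral\<^sup>L lebesgue (indicator (A n) :: _ \<Rightarrow> real)) \<longlonglongrightarrow> integral\<^sup>L lebesgue (indicator B)"
  proof (rule integral_dominated_convergence[where w="indicator \<Omega>"])
    show "integrable lebesgue (indicator \<Omega> :: _ \<Rightarrow> real)" using O by simp
    show "AE x in lebesgue. norm (indicator (A n) x :: real) \<le> indicator \<Omega> x" for n
      using A(2)[of n] by (auto simp: indicator_def)
  qed (use A B L in auto)
  moreover have "integral\<^sup>L lebesgue (indicator S :: _ \<Rightarrow> real) = measure lebesgue S" if "S \<subseteq> \<Omega>" "S \<in> sets lebesgue" for S
    using fin[OF that] that by (simp add: less_top)
  ultimately show ?thesis using A B by simp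
qed

lemma split_exists:
  fixes \<Omega> :: "'a::euclidean_space set" and e :: 'a
  assumes O: "\<Omega> \<in> sets lebesgue" "emeasure lebesgue \<Omega> = ennreal W" and e: "e \<noteq> 0"
    and V: "0 < V" "V < W"
  shows "\<exists>t. measure lebesgue (\<Omega> \<inter> {x. x \<bullet> e < t}) = V"
proof -
  define g where "g t = measure lebesgue (\<Omega> \<inter> {x. x \<bullet> e < t})" for t
  have Ofin: "emeasure lebesgue \<Omega> < \<infinity>" using O by simp
  have Sm: "\<Omega> \<inter> {x. x \<bullet> e < t} \<in> sets lebesgue" for t
    using O(1) by (intro sets.Int) (auto intro: open_leb open_halfspace_lt)
  have null: "{x. x \<bullet> e = t} \<in> null_sets lebesgue" for t
    proof -
    have "{x. x \<bullet> e = t} = {x. e \<bullet> x = t}" by (auto simp: inner_commute)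
    then show ?thesis using negligible_hyperplane[of e t] e negligible_iff_null_sets by metis
  qed
  have cont: "continuous_on UNIV g"
  proof (intro continuous_at_imp_continuous_on ballI)
    fix t :: real
    show "isCont g t"
    proof (rule continuous_at_sequentially[THEN iffD2], intro allI impI)
      fix X assume X: "X \<longlonglongrightarrow> t"
      have "AE x in lebesgue. x \<notin> {x. x \<bullet> e = t}"
        using AE_not_in[OF null] .
      then have "AE x in lebesgue. (\<lambda>n. indicator (\<Omega> \<inter> {x. x \<bullet> e < X n}) x :: real) \<longlonglongrightarrow> indicator (\<Omega> \<inter> {x. x \<bullet> e < t}) x"
      proof eventually_elim
        fix x assume "x \<notin> {x. x \<bullet> e = t}"
        then consider "x \<bullet> e < t" | "x \<bullet> e > t" by fastforce
        then show "(\<lambda>n. indicator (\<Omega> \<inter> {x. x \<bullet> e < X n}) x :: real) \<longlonglongrightarrow> indicator (\<Omega> \<inter> {x. x \<bullet> e < t}) x"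
        proof cases
          case 1
          then have "eventually (\<lambda>n. x \<bullet> e < X n) sequentially"
            using X order_tendstoD(1) by blast
          then have "eventually (\<lambda>n. indicator (\<Omega> \<inter> {x. x \<bullet> e < X n}) x = (indicator (\<Omega> \<inter> {x. x \<bullet> e < t}) x :: real)) sequentially"
            by eventually_elim (use 1 in \<open>auto simp: indicator_def\<close>)
          then show ?thesis by (rule tendsto_eventually)
        next
          case 2
          then have "eventually (\<lambda>n. X n < x \<bullet> e) sequentially"
            using X order_tendstoD(2) by blast
          then have "eventually (\<lambda>n. indicator (\<Omega> \<inter> {x. x \<bullet> e < X n}) x = (indicator (\<Omega> \<inter> {x. x \<bullet> e < t}) x :: real)) sequentially"
            by eventually_elim (use 2 in \<open>auto simp: indicator_def\<close>)
          then show ?thesis by (rule tendsto_eventually)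
        qed
      qed
      then show "(g \<circ> X) \<longlonglongrightarrow> g t"
        unfolding g_def o_def by (intro meas_lim[OF O(1) Ofin] Sm) auto
    qed
  qed
  have lo: "(\<lambda>n. g (- real n)) \<longlonglongrightarrow> measure lebesgue ({}::'a set)"
    unfolding g_def
  proof (rule meas_lim[OF O(1) Ofin, where A="\<lambda>n. \<Omega> \<inter> {x. x \<bullet> e < - real n}" and B="{}"])
    show "AE x in lebesgue. (\<lambda>n. indicator (\<Omega> \<inter> {x. x \<bullet> e < - real n}) x :: real) \<longlonglongrightarrow> indicator {} x"
    proof (intro AE_I2 tendsto_eventually)
      fix x :: 'a
      obtain N :: nat where "- (x \<bullet> e) \<le> real N" using real_arch_simple by blast
      then show "eventually (\<lambda>n. indicator (\<Omega> \<inter> {x. x \<bullet> e < - real n}) x = (indicator {} x :: real)) sequentially"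
        unfolding eventually_sequentially by (intro exI[of _ N]) (auto simp: indicator_def)
    qed
  qed (auto intro: Sm)
  have hi: "(\<lambda>n. g (real n)) \<longlonglongrightarrow> measure lebesgue \<Omega>"
    unfolding g_def
  proof (rule meas_lim[OF O(1) Ofin, where A="\<lambda>n. \<Omega> \<inter> {x. x \<bullet> e < real n}" and B="\<Omega>"])
    show "AE x in lebesgue. (\<lambda>n. indicator (\<Omega> \<inter> {x. x \<bullet> e < real n}) x :: real) \<longlonglongrightarrow> indicator \<Omega> x"
    proof (intro AE_I2 tendsto_eventually)
      fix x :: 'a
      obtain N :: nat where "(x \<bullet> e) + 1 \<le> real N" using real_arch_simple by blast
      then show "eventually (\<lambda>n. indicator (\<Omega> \<inter> {x. x \<bullet> e < real n}) x = (indicator \<Omega> x :: real)) sequentially"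
        unfolding eventually_sequentially by (intro exI[of _ N]) (auto simp: indicator_def)
    qed
  qed (use O Sm in auto)
  have mW: "measure lebesgue \<Omega> = W" using O V by (simp add: measure_def)
  from lo have "eventually (\<lambda>n. g (- real n) < V) sequentially"
    using V by (intro order_tendstoD(2)) auto
  moreover from hi have "eventually (\<lambda>n. V < g (real n)) sequentially"
    using V mW by (intro order_tendstoD(1)) auto
  ultimately have "eventually (\<lambda>n. g (- real n) < V \<and> V < g (real n)) sequentially"
    by (rule eventually_conj)
  then obtain N where "\<forall>n\<ge>N. g (- real n) < V \<and> V < g (real n)"
    unfolding eventually_sequentially by blast
  then obtain n where n: "g (- real n) < V" "V < g (real n)" by blast
  have "\<exists>t. - real n \<le> t \<and> t \<le> real n \<and> g t = V"
    by (rule IVT') (use n in \<open>auto intro: continuous_on_subset[OF cont]\<close>)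
  then show ?thesis unfolding g_def by blast
qed

lemma bound_V:
  fixes f :: "'a::euclidean_space \<Rightarrow> real"
  assumes N: "norm_pV p V f = ennreal m" "0 \<le> m" and p: "0 < p" and V: "0 < V"
    and O: "open \<Omega>" "convex \<Omega>" "emeasure lebesgue \<Omega> = ennreal V"
  shows "(\<integral>\<^sup>+ x \<in> \<Omega>. ennreal (\<bar>f x\<bar> powr p) \<partial>lebesgue) \<le> ennreal (V * m powr p)"
proof -
  define I where "I = (\<integral>\<^sup>+ x \<in> \<Omega>. ennreal (\<bar>f x\<bar> powr p) \<partial>lebesgue)"
  have "mean_p p f \<Omega> \<le> norm_pV p V f"
    unfolding norm_pV_def using O by (intro SUP_upper) auto
  moreover have mV: "measure lebesgue \<Omega> = V" using O V by (simp add: measure_def)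
  ultimately have le: "ennreal_root p (ennreal (1 / V) * I) \<le> ennreal m"
    using N unfolding mean_p_def I_def by simp
  have "I \<noteq> \<infinity>"
  proof
    assume "I = \<infinity>"
    then have "ennreal (1 / V) * I = \<infinity>" using V by (simp add: ennreal_mult_eq_top_iff)
    then show False using le by (simp add: ennreal_root_def top_unique)
  qed
  then obtain i where i: "I = ennreal i" "0 \<le> i" by (cases I) auto
  have "ennreal (1 / V) * I = ennreal (i / V)" using i V by (simp add: ennreal_mult[symmetric])
  then have "ennreal ((i / V) powr (1 / p)) \<le> ennreal m"
    using le i V by (simp add: ennreal_root_def)
  then have r: "(i / V) powr (1 / p) \<le> m" using N(2) by simp
  have "i / V = ((i / V) powr (1 / p)) powr p"
    using p i V by (simp add: powr_powr)
  also have "\<dots> \<le> m powr p" using r p by (intro powr_mono2) auto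
  finally have "i \<le> V * m powr p" using V by (simp add: divide_simps mult.commute)
  then show ?thesis using i unfolding I_def by simp
qed

lemma split_set:
  fixes \<Omega> :: "'a::euclidean_space set" and h :: "'a \<Rightarrow> ennreal"
  assumes h: "h \<in> borel_measurable lebesgue"
    and O: "open \<Omega>" "convex \<Omega>" "emeasure lebesgue \<Omega> = ennreal W" and V: "0 < V" "V < W"
  shows "\<exists>A B. open A \<and> convex A \<and> emeasure lebesgue A = ennreal V \<and>
     open B \<and> convex B \<and> emeasure lebesgue B = ennreal (W - V) \<and>
     (\<integral>\<^sup>+ x \<in> \<Omega>. h x \<partial>lebesgue) = (\<integral>\<^sup>+ x \<in> A. h x \<partial>lebesgue) + (\<integral>\<^sup>+ x \<in> B. h x \<partial>lebesgue)"
proof -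
  obtain e :: 'a where e: "e \<in> Basis" using nonempty_Basis by blast
  then have e0: "e \<noteq> 0" by auto
  obtain t where t: "measure lebesgue (\<Omega> \<inter> {x. x \<bullet> e < t}) = V"
    using split_exists[OF open_leb[OF O(1)] O(3) e0 V] by blast
  define A where "A = \<Omega> \<inter> {x. e \<bullet> x < t}"
  define B where "B = \<Omega> \<inter> {x. e \<bullet> x > t}"
  define H where "H = \<Omega> \<inter> {x. e \<bullet> x = t}"
  have oA: "open A" "convex A" unfolding A_def using O
    by (auto intro: open_Int convex_Int open_halfspace_lt convex_halfspace_lt)
  have oB: "open B" "convex B" unfolding B_def using O
    by (auto intro: open_Int convex_Int open_halfspace_gt convex_halfspace_gt)
  have Hn: "H \<in> null_sets lebesgue"
  proof -
    have "negligible {x. e \<bullet> x = t}" using negligible_hyperplane e0 by blast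
    then have "negligible H" unfolding H_def by (rule negligible_subset) auto
    then show ?thesis using negligible_iff_null_sets by blast
  qed
  have mA: "measure lebesgue A = V" using t unfolding A_def by (simp add: inner_commute)
  have sA: "A \<in> sets lebesgue" "B \<in> sets lebesgue" using oA oB open_leb by auto
  have Om: "\<Omega> = (A \<union> B) \<union> H" unfolding A_def B_def H_def by auto
  have "emeasure lebesgue \<Omega> = emeasure lebesgue (A \<union> B)"
    using Om emeasure_Un_null_set[OF _ Hn, of "A \<union> B"] sA by auto
  also have "\<dots> = emeasure lebesgue A + emeasure lebesgue B"
    using sA by (intro plus_emeasure[symmetric]) (auto simp: A_def B_def)
  finally have sum: "ennreal W = emeasure lebesgue A + emeasure lebesgue B" using O by simp
  then have "emeasure lebesgue A \<noteq> \<infinity>" "emeasure lebesgue B \<noteq> \<infinity>" by (auto simp: top_add)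
  then have eA: "emeasure lebesgue A = ennreal V" and eB': "emeasure lebesgue B = ennreal (measure lebesgue B)"
    using mA by (auto simp: emeasure_eq_ennreal_measure)
  have "ennreal W = ennreal (V + measure lebesgue B)" using sum eA eB' V by (simp add: ennreal_plus)
  then have "W = V + measure lebesgue B" using V by (subst (asm) ennreal_inj) auto
  then have eB: "emeasure lebesgue B = ennreal (W - V)" using eB' by simp
  have "(\<integral>\<^sup>+ x \<in> \<Omega>. h x \<partial>lebesgue) = (\<integral>\<^sup>+ x. h x * indicator A x + h x * indicator B x \<partial>lebesgue)"
  proof (rule nn_integral_cong_AE)
    show "AE x in lebesgue. h x * indicator \<Omega> x = h x * indicator A x + h x * indicator B x"
      using AE_not_in[OF Hn]
    proof eventually_elim
      fix x assume "x \<notin> H"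
      then show "h x * indicator \<Omega> x = h x * indicator A x + h x * indicator B x"
        unfolding A_def B_def H_def by (auto simp: indicator_def)
    qed
  qed
  also have "\<dots> = (\<integral>\<^sup>+ x \<in> A. h x \<partial>lebesgue) + (\<integral>\<^sup>+ x \<in> B. h x \<partial>lebesgue)"
    using sA h by (intro nn_integral_add) auto
  finally show ?thesis using oA oB eA eB by blast
qed

lemma bound_d:
  fixes f :: "'a::euclidean_space \<Rightarrow> real"
  assumes f: "f \<in> borel_measurable lebesgue"
    and N: "norm_pV p V f = ennreal m" "0 \<le> m" and p: "0 < p" and V: "0 < V"
    and d: "1 \<le> d"
  shows "open \<Omega> \<Longrightarrow> convex \<Omega> \<Longrightarrow> emeasure lebesgue \<Omega> = ennreal (real d * V) \<Longrightarrow>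
     (\<integral>\<^sup>+ x \<in> \<Omega>. ennreal (\<bar>f x\<bar> powr p) \<partial>lebesgue) \<le> ennreal (real d * V * m powr p)"
  using d
proof (induction d arbitrary: \<Omega> rule: dec_induct)
  case base
  then show ?case using bound_V[OF N p V] by simp
next
  case (step d)
  have h: "(\<lambda>x. ennreal (\<bar>f x\<bar> powr p)) \<in> borel_measurable lebesgue" using f by measurable
  have "V < real (Suc d) * V" using V step(1) by simp
  from split_set[OF h step(4,5) step(6) V(1) this]
  obtain A B where AB: "open A" "convex A" "emeasure lebesgue A = ennreal V"
    "open B" "convex B" "emeasure lebesgue B = ennreal (real (Suc d) * V - V)"
    "(\<integral>\<^sup>+ x \<in> \<Omega>. ennreal (\<bar>f x\<bar> powr p) \<partial>lebesgue) = (\<integral>\<^sup>+ x \<in> A. ennreal (\<bar>f x\<bar> powr p) \<partial>lebesgue) + (\<integral>\<^sup>+ x \<in> B. ennreal (\<bar>f x\<bar> powr p) \<partial>lebesgue)"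
    by blast
  have "real (Suc d) * V - V = real d * V" by (simp add: algebra_simps)
  then have IB: "(\<integral>\<^sup>+ x \<in> B. ennreal (\<bar>f x\<bar> powr p) \<partial>lebesgue) \<le> ennreal (real d * V * m powr p)"
    using step(3)[OF AB(4,5)] AB(6) by simp
  have IA: "(\<integral>\<^sup>+ x \<in> A. ennreal (\<bar>f x\<bar> powr p) \<partial>lebesgue) \<le> ennreal (V * m powr p)"
    using bound_V[OF N p V AB(1-3)] .
  have "(\<integral>\<^sup>+ x \<in> \<Omega>. ennreal (\<bar>f x\<bar> powr p) \<partial>lebesgue) \<le> ennreal (V * m powr p) + ennreal (real d * V * m powr p)"
    using AB(7) IA IB add_mono by simp
  also have "\<dots> = ennreal (real (Suc d) * V * m powr p)"
    using V N(2) by (simp add: ennreal_plus[symmetric] algebra_simps del: ennreal_plus)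
  finally show ?case .
qed

theorem lemma2p3:
  fixes f :: "'a::euclidean_space \<Rightarrow> real" and p V :: real and d :: nat
  assumes "f \<in> borel_measurable lebesgue"
    and "norm_pV p V f < \<infinity>"
    and "1 \<le> p" and "0 < V" and "1 \<le> d"
  shows "norm_pV p (real d * V) f \<le> norm_pV p V f"
proof -
  obtain m where N: "norm_pV p V f = ennreal m" "0 \<le> m"
    using assms(2) by (cases "norm_pV p V f") auto
  have p: "0 < p" using assms by simp
  have dV: "0 < real d * V" using assms by simp
  show ?thesis unfolding N(1)
    unfolding norm_pV_def[of p "real d * V"]
  proof (rule SUP_least)
    fix \<Omega> :: "'a set" assume "\<Omega> \<in> {\<Omega>. open \<Omega> \<and> convex \<Omega> \<and> emeasure lebesgue \<Omega> = ennreal (real d * V)}"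
    then have O: "open \<Omega>" "convex \<Omega>" "emeasure lebesgue \<Omega> = ennreal (real d * V)" by auto
    define I where "I = (\<integral>\<^sup>+ x \<in> \<Omega>. ennreal (\<bar>f x\<bar> powr p) \<partial>lebesgue)"
    have Ile: "I \<le> ennreal (real d * V * m powr p)"
      unfolding I_def using bound_d[OF assms(1) N p assms(4,5) O] .
    then have "I < top" by (rule le_less_trans[OF _ ennreal_less_top])
    then have "I \<noteq> \<infinity>" by simp
    then obtain i where i: "I = ennreal i" "0 \<le> i" by (cases I) auto
    have il: "i \<le> real d * V * m powr p" using Ile i dV N(2) by (auto simp: ennreal_le_iff2)
    have mO: "measure lebesgue \<Omega> = real d * V" using O dV by (simp add: measure_def)
    have "ennreal (1 / (real d * V)) * I = ennreal (i / (real d * V))" using i dV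
      by (simp add: ennreal_mult[symmetric])
    then have "mean_p p f \<Omega> = ennreal ((i / (real d * V)) powr (1 / p))"
      unfolding mean_p_def mO I_def[symmetric] using i dV by (simp add: ennreal_root_def)
    also have "\<dots> \<le> ennreal ((m powr p) powr (1 / p))"
      using il dV i p by (intro ennreal_leI powr_mono2) (auto simp: divide_simps mult.commute)
    also have "\<dots> = ennreal m" using N(2) p by (simp add: powr_powr)
    finally show "mean_p p f \<Omega> \<le> ennreal m" .
  qed
qed

end
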